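(* Let $\varepsilon\in(0,1/2)$ and $p\ge1$. (i) If $(\mu_n)_n\subset\mathscr P(\mathbb R)$ is a tight sequence of atomless measures, then $\sup_n\operatorname{diam}(I_\varepsilon[\mu_n])<\infty$ and $\sup_n|X_{\mu_n}(s)|<\infty$ for every $s\in(0,1)$. (ii) For all atomless $\mu,\nu\in\mathscr P_p(\mathbb R)$, $$\left|\Big(\int_{I_\varepsilon[\mu]^c}|x|^p\,d\mu\Big)^{1/p}-\Big(\int_{I_\varepsilon[\nu]^c}|x|^p\,d\nu\Big)^{1/p}\right|\le\|X_\mu-X_\nu\|_{L^p([\varepsilon,1-\varepsilon]^c)},$$ where $[\varepsilon,1-\varepsilon]^c=(0,1)\setminus[\varepsilon,1-\varepsilon]$. In particular, if $\mu_n,\mu$ are atomless and $\mu_n\to\mu$ in $\mathbb W_p$, then $\lim_n\int_{I_\varepsilon[\mu_n]^c}|x|^p\,d\mu_n=\int_{I_\varepsilon[\mu]^c}|x|^p\,d\mu$.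
   Context: For $\mu\in\mathscr P(\mathbb R)$, $X_\mu(z)=\inf\{a\in\mathbb R:\mu(-\infty,a)>z\}$ for $z\in(0,1)$ is the quantile function, and $I_\varepsilon[\mu]=[X_\mu(\varepsilon),X_\mu(1-\varepsilon)]$. $\mathbb W_p$ is the $p$-Wasserstein distance. *)

theory Defs
  imports "HOL-Probability.Probability"
begin

definition quantile :: "real measure \<Rightarrow> real \<Rightarrow> real" where
  "quantile \<mu> z = Inf {a. measure \<mu> {..<a} > z}"

definition quantile_interval :: "real measure \<Rightarrow> real \<Rightarrow> real set" where
  "quantile_interval \<mu> \<epsilon> = {quantile \<mu> \<epsilon> .. quantile \<mu> (1 - \<epsilon>)}"

definition atomless :: "real measure \<Rightarrow> bool" where
  "atomless \<mu> \<longleftrightarrow> (\<forall>x. measure \<mu> {x} = 0)"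

definition Pp :: "real \<Rightarrow> real measure \<Rightarrow> bool" where
  "Pp p \<mu> \<longleftrightarrow> real_distribution \<mu> \<and> integrable \<mu> (\<lambda>x. \<bar>x\<bar> powr p)"

definition couplings :: "real measure \<Rightarrow> real measure \<Rightarrow> (real \<times> real) measure set" where
  "couplings \<mu> \<nu> = {\<pi>. prob_space \<pi> \<and> sets \<pi> = sets (borel :: (real \<times> real) measure) \<and>
      distr \<pi> borel fst = \<mu> \<and> distr \<pi> borel snd = \<nu>}"

text \<open>p-Wasserstein distance (finite for measures in P_p).\<close>
definition wasserstein :: "real \<Rightarrow> real measure \<Rightarrow> real measure \<Rightarrow> real" where
  "wasserstein p \<mu> \<nu> =
     enn2real (INF \<pi>\<in>couplings \<mu> \<nu>. \<integral>\<^sup>+ z. ennreal (\<bar>fst z - snd z\<bar> powr p) \<partial>\<pi>) powr (1 / p)"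

definition tail_moment :: "real \<Rightarrow> real \<Rightarrow> real measure \<Rightarrow> real" where
  "tail_moment p \<epsilon> \<mu> = (LINT x:(- quantile_interval \<mu> \<epsilon>)|\<mu>. \<bar>x\<bar> powr p)"

end

theory Submission
  imports Defs
begin



lemma quantile_bounds:
  assumes rd: "real_distribution \<mu>" and a: "measure \<mu> {..a} < s" and b: "s < measure \<mu> {..<b}"
  shows "a \<le> quantile \<mu> s" "quantile \<mu> s \<le> b"
proof -
  interpret real_distribution \<mu> by fact
  let ?S = "{x. measure \<mu> {..<x} > s}"
  have bS: "b \<in> ?S" using b by simp
  have low: "a < x" if "x \<in> ?S" for x
  proof (rule ccontr)
    assume "\<not> a < x"
    then have "measure \<mu> {..<x} \<le> measure \<mu> {..a}"
      by (intro finite_measure_mono) auto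
    with that a show False by simp
  qed
  have bdd: "bdd_below ?S" using low by (auto intro!: bdd_belowI[of _ a] less_imp_le)
  show "quantile \<mu> s \<le> b" unfolding quantile_def by (rule cInf_lower[OF bS bdd])
  show "a \<le> quantile \<mu> s" unfolding quantile_def
    using bS low by (intro cInf_greatest) (auto intro: less_imp_le)
qed

lemma part1:
  fixes \<epsilon> :: real
  assumes "0 < \<epsilon>" "\<epsilon> < 1/2"
  shows "(\<forall>\<mu>s :: nat \<Rightarrow> real measure. tight \<mu>s \<and> (\<forall>n. atomless (\<mu>s n)) \<longrightarrow>
        bdd_above (range (\<lambda>n. diameter (quantile_interval (\<mu>s n) \<epsilon>))) \<and>
        (\<forall>s\<in>{0<..<1}. bdd_above (range (\<lambda>n. \<bar>quantile (\<mu>s n) s\<bar>))))"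
proof (intro allI impI)
  fix \<mu>s :: "nat \<Rightarrow> real measure"
  assume "tight \<mu>s \<and> (\<forall>n. atomless (\<mu>s n))"
  then have rd: "\<And>n. real_distribution (\<mu>s n)" and
    tt: "\<And>e. e > 0 \<Longrightarrow> \<exists>a b::real. a < b \<and> (\<forall>n. measure (\<mu>s n) {a<..b} > 1 - e)"
    unfolding tight_def by auto
  have B: "\<exists>B. \<forall>n. \<bar>quantile (\<mu>s n) s\<bar> \<le> B" if s: "0 < s" "s < 1" for s
  proof -
    obtain a b where ab: "a < b" "\<And>n. measure (\<mu>s n) {a<..b} > 1 - min s (1 - s)"
      using tt[of "min s (1-s)"] s by auto
    have "a \<le> quantile (\<mu>s n) s \<and> quantile (\<mu>s n) s \<le> b + 1" for n
    proof -
      interpret real_distribution "\<mu>s n" by (rule rd)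
      have d: "{..a} \<inter> {a<..b} = {}" by auto
      have "measure (\<mu>s n) ({..a} \<union> {a<..b}) \<le> 1" by simp
      then have "measure (\<mu>s n) {..a} + measure (\<mu>s n) {a<..b} \<le> 1"
        using finite_measure_Union[of "{..a}" "{a<..b}"] d by simp
      then have 1: "measure (\<mu>s n) {..a} < s" using ab(2)[of n] by linarith
      have "measure (\<mu>s n) {a<..b} \<le> measure (\<mu>s n) {..<b+1}"
        by (intro finite_measure_mono) auto
      then have 2: "s < measure (\<mu>s n) {..<b+1}" using ab(2)[of n] by linarith
      show ?thesis using quantile_bounds[OF rd 1 2] by auto
    qed
    then show ?thesis by (intro exI[of _ "\<bar>a\<bar> + \<bar>b + 1\<bar>"] allI) (smt (verit))
  qed
  show "bdd_above (range (\<lambda>n. diameter (quantile_interval (\<mu>s n) \<epsilon>))) \<and>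
        (\<forall>s\<in>{0<..<1}. bdd_above (range (\<lambda>n. \<bar>quantile (\<mu>s n) s\<bar>)))"
  proof
    obtain B1 where B1: "\<And>n. \<bar>quantile (\<mu>s n) \<epsilon>\<bar> \<le> B1" using B[of \<epsilon>] assms by auto
    obtain B2 where B2: "\<And>n. \<bar>quantile (\<mu>s n) (1-\<epsilon>)\<bar> \<le> B2" using B[of "1-\<epsilon>"] assms by auto
    have "diameter (quantile_interval (\<mu>s n) \<epsilon>) \<le> B1 + B2" for n
      using B1[of n] B2[of n] unfolding quantile_interval_def by auto
    then show "bdd_above (range (\<lambda>n. diameter (quantile_interval (\<mu>s n) \<epsilon>)))"
      by (auto intro!: bdd_aboveI)
    show "\<forall>s\<in>{0<..<1}. bdd_above (range (\<lambda>n. \<bar>quantile (\<mu>s n) s\<bar>))"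
    proof
      fix s :: real assume "s \<in> {0<..<1}"
      then obtain C where "\<And>n. \<bar>quantile (\<mu>s n) s\<bar> \<le> C" using B by auto
      then show "bdd_above (range (\<lambda>n. \<bar>quantile (\<mu>s n) s\<bar>))" by (auto intro!: bdd_aboveI)
    qed
  qed
qed




locale atl = real_distribution +
  assumes atl: "atomless M"
begin

abbreviation "Q \<equiv> quantile M"
abbreviation "C \<equiv> cdf M"

lemma lessThan_eq_cdf: "measure M {..<a} = C a"
proof -
  have "C a = measure M ({..<a} \<union> {a})" unfolding cdf_def by (metis ivl_disj_un_singleton(2))
  also have "\<dots> = measure M {..<a} + measure M {a}" by (rule finite_measure_Union) auto
  finally show ?thesis using atl unfolding atomless_def by simp
qed

lemma C_cont: "isCont C x"
  using atl unfolding atomless_def isCont_cdf by simp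

lemma C_mono: "x \<le> y \<Longrightarrow> C x \<le> C y"
  by (rule cdf_nondecreasing)

lemma Q_less_iff:
  assumes z: "0 < z" "z < 1"
  shows "Q z < a \<longleftrightarrow> z < C a"
proof -
  let ?S = "{x. C x > z}"
  have Qd: "Q z = Inf ?S" unfolding quantile_def lessThan_eq_cdf ..
  have "eventually (\<lambda>x. z < C x) at_top"
    using order_tendstoD(1)[OF cdf_lim_at_top_prob] z by simp
  then obtain x0 where "z < C x0" by (meson eventually_happens' trivial_limit_at_top_linorder)
  then have ne: "?S \<noteq> {}" by auto
  have "eventually (\<lambda>x. C x < z) at_bot"
    using order_tendstoD(2)[OF cdf_lim_at_bot] z by simp
  then obtain y0 where y0: "C y0 < z" by (meson eventually_happens' trivial_limit_at_bot_linorder)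
  have "y0 \<le> x" if "x \<in> ?S" for x
  proof (rule ccontr)
    assume "\<not> y0 \<le> x" then have "C x \<le> C y0" by (intro C_mono) auto
    with that y0 show False by simp
  qed
  then have bdd: "bdd_below ?S" by (auto intro!: bdd_belowI)
  show ?thesis
  proof
    assume "Q z < a"
    then obtain s where "s \<in> ?S" "s < a" unfolding Qd using cInf_less_iff[OF ne bdd] by auto
    then show "z < C a" using C_mono[of s a] by auto
  next
    assume za: "z < C a"
    have "(C \<longlongrightarrow> C a) (at_left a)" using C_cont[of a]
      by (simp add: continuous_at filterlim_at_split)
    then have "eventually (\<lambda>x. z < C x) (at_left a)" using order_tendstoD(1) za by blast
    then obtain b where b: "b < a" "\<And>y. b < y \<Longrightarrow> y < a \<Longrightarrow> z < C y"
      unfolding eventually_at_left_field by auto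
    have "(a + b)/2 \<in> ?S" using b by auto
    then have "Q z \<le> (a+b)/2" unfolding Qd by (rule cInf_lower[OF _ bdd])
    then show "Q z < a" using b by auto
  qed
qed

lemma C_Q:
  assumes z: "0 < z" "z < 1"
  shows "C (Q z) = z"
proof (rule antisym)
  have "(C \<longlongrightarrow> C (Q z)) (at_left (Q z))" using C_cont[of "Q z"]
    by (simp add: continuous_at filterlim_at_split)
  moreover have "eventually (\<lambda>x. C x \<le> z) (at_left (Q z))"
    unfolding eventually_at_left_field
  proof (intro exI[of _ "Q z - 1"] conjI allI impI)
    fix y assume "Q z - 1 < y" "y < Q z"
    then show "C y \<le> z" using Q_less_iff[OF z, of y] by linarith
  qed simp
  ultimately show "C (Q z) \<le> z" by (rule tendsto_upperbound) simp
next
  have "(C \<longlongrightarrow> C (Q z)) (at_right (Q z))" using C_cont[of "Q z"]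
    by (simp add: continuous_at filterlim_at_split)
  moreover have "eventually (\<lambda>x. z \<le> C x) (at_right (Q z))"
    using eventually_at_right_less[of "Q z"] by eventually_elim (use Q_less_iff[OF z] in auto)
  ultimately show "z \<le> C (Q z)" by (rule tendsto_lowerbound) simp
qed

lemma Q_strict:
  assumes "0 < z" "z < w" "w < 1"
  shows "Q z < Q w"
  using Q_less_iff[of z "Q w"] C_Q[of w] assms by auto

lemma Q_mono: "mono_on {0<..<1} Q"
  unfolding mono_on_def
proof (intro allI impI)
  fix r s :: real assume "r \<in> {0<..<1} \<and> s \<in> {0<..<1} \<and> r \<le> s"
  then show "Q r \<le> Q s" using Q_strict[of r s] by (cases "r = s") auto
qed

abbreviation "\<Omega> \<equiv> restrict_space lborel {0<..<1::real}"

lemma Q_meas[measurable]: "Q \<in> borel_measurable \<Omega>"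
proof -
  have "Q \<in> borel_measurable (restrict_space borel {0<..<1})"
    by (rule borel_measurable_mono_on_fnc[OF Q_mono])
  then show ?thesis by (subst measurable_cong_sets[OF sets_restrict_space_cong[OF sets_lborel] refl])
qed

lemma distr_Q: "distr \<Omega> borel Q = M"
proof (intro cdf_unique ext)
  interpret \<Omega>: prob_space \<Omega>
    by (auto simp add: emeasure_restrict_space space_restrict_space intro!: prob_spaceI)
  show "real_distribution (distr \<Omega> borel Q)" by auto
  show "real_distribution M" ..
  fix x
  let ?T = "{z\<in>{0<..<1}. Q z \<le> x}"
  have Tm: "?T \<in> sets lborel"
  proof -
    have "Q -` {..x} \<inter> space \<Omega> \<in> sets \<Omega>" by measurable
    moreover have "Q -` {..x} \<inter> space \<Omega> = ?T" by (auto simp: space_restrict_space)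
    ultimately have "?T \<in> sets \<Omega>" by simp
    then show ?thesis by (subst (asm) sets_restrict_space_iff) auto
  qed
  have "cdf (distr \<Omega> borel Q) x = measure \<Omega> (Q -` {..x} \<inter> space \<Omega>)"
    unfolding cdf_def by (subst measure_distr) auto
  also have "\<dots> = measure lborel ?T"
    by (subst measure_restrict_space) (auto simp: space_restrict_space intro!: arg_cong2[where f=measure])
  also have "\<dots> = C x"
  proof -
    have 0: "0 \<le> C x" "C x \<le> 1" using cdf_nonneg cdf_bounded_prob by auto
    have "{0<..<C x} \<subseteq> ?T" using Q_less_iff 0 by (auto intro: less_imp_le)
    then have "emeasure lborel {0<..<C x} \<le> emeasure lborel ?T" by (intro emeasure_mono Tm)
    moreover have "?T \<subseteq> {0<..C x}"
    proof
      fix w assume "w \<in> ?T"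
      then have w: "0 < w" "w < 1" "Q w \<le> x" by auto
      then have "C (Q w) \<le> C x" by (intro C_mono)
      then show "w \<in> {0<..C x}" using C_Q[of w] w by simp
    qed
    then have "emeasure lborel ?T \<le> emeasure lborel {0<..C x}" by (intro emeasure_mono) auto
    ultimately have "emeasure lborel ?T = ennreal (C x)" using 0 by (simp add: emeasure_lborel_Ioc)
    then show ?thesis unfolding measure_def using 0 by simp
  qed
  finally show "cdf (distr \<Omega> borel Q) x = C x" .
qed

lemma integral_Q:
  fixes g :: "real \<Rightarrow> real"
  assumes [measurable]: "g \<in> borel_measurable borel"
  shows "integral\<^sup>L M g = integral\<^sup>L \<Omega> (\<lambda>z. g (Q z))"
proof -
  have "integral\<^sup>L (distr \<Omega> borel Q) g = integral\<^sup>L \<Omega> (\<lambda>z. g (Q z))" by (rule integral_distr) auto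
  then show ?thesis unfolding distr_Q .
qed

lemma integrable_Q:
  fixes g :: "real \<Rightarrow> real"
  assumes [measurable]: "g \<in> borel_measurable borel"
  shows "integrable M g \<longleftrightarrow> integrable \<Omega> (\<lambda>z. g (Q z))"
proof -
  have "integrable (distr \<Omega> borel Q) g \<longleftrightarrow> integrable \<Omega> (\<lambda>z. g (Q z))" by (rule integrable_distr_eq) auto
  then show ?thesis unfolding distr_Q .
qed

end



lemma powr_conv:
  fixes t u y p :: real
  assumes p: "1 \<le> p" and t: "0 \<le> t" "t \<le> 1" and uv: "0 \<le> u" "0 \<le> y"
  shows "(t*u + (1-t)*y) powr p \<le> t * u powr p + (1-t) * y powr p"
proof -
  have key: "(s*w) powr p \<le> s * w powr p" if "0 \<le> s" "s \<le> 1" "0 \<le> w" for s w :: real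
  proof -
    have "(s*w) powr p = s powr p * w powr p" using that by (simp add: powr_mult)
    also have "\<dots> \<le> s powr 1 * w powr p"
      using that p by (intro mult_right_mono powr_mono') auto
    finally show ?thesis using that by simp
  qed
  show ?thesis
  proof (cases "u = 0 \<or> y = 0")
    case True
    then show ?thesis
    proof
      assume "u = 0" then show ?thesis using key[of "1-t" y] t uv p by simp
    next
      assume "y = 0" then show ?thesis using key[of t u] t uv p by simp
    qed
  next
    case False
    then have "u > 0" "y > 0" using uv by auto
    then show ?thesis
      using powr_convex[OF p] t unfolding convex_on_def by auto
  qed
qed

lemma powr_sum_bound:
  fixes u y p :: real
  assumes "0 \<le> p"
  shows "\<bar>u + y\<bar> powr p \<le> 2 powr p * (\<bar>u\<bar> powr p + \<bar>y\<bar> powr p)"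
proof -
  have "\<bar>u + y\<bar> \<le> 2 * max \<bar>u\<bar> \<bar>y\<bar>" by auto
  then have "\<bar>u + y\<bar> powr p \<le> (2 * max \<bar>u\<bar> \<bar>y\<bar>) powr p" by (intro powr_mono2 assms) auto
  also have "\<dots> = 2 powr p * max \<bar>u\<bar> \<bar>y\<bar> powr p" by (simp add: powr_mult)
  also have "\<dots> \<le> 2 powr p * (\<bar>u\<bar> powr p + \<bar>y\<bar> powr p)"
    by (intro mult_left_mono) (auto simp: max_def)
  finally show ?thesis .
qed

lemma powr_inv_powr: "0 \<le> (x::real) \<Longrightarrow> 1 \<le> p \<Longrightarrow> (x powr (1/p)) powr p = x"
  by (simp add: powr_powr)

lemma powr_powr_inv: "0 \<le> (x::real) \<Longrightarrow> 1 \<le> p \<Longrightarrow> (x powr p) powr (1/p) = x"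
  by (simp add: powr_powr)

lemma minkowski_integrable:
  fixes f g :: "'a \<Rightarrow> real"
  assumes p: "1 \<le> p" and [measurable]: "f \<in> borel_measurable M" "g \<in> borel_measurable M"
    and If: "integrable M (\<lambda>x. \<bar>f x\<bar> powr p)" and Ig: "integrable M (\<lambda>x. \<bar>g x\<bar> powr p)"
  shows "integrable M (\<lambda>x. \<bar>f x + g x\<bar> powr p)"
proof (rule Bochner_Integration.integrable_bound)
  show "integrable M (\<lambda>x. 2 powr p * (\<bar>f x\<bar> powr p + \<bar>g x\<bar> powr p))"
    using If Ig by auto
  show "AE x in M. norm (\<bar>f x + g x\<bar> powr p) \<le> norm (2 powr p * (\<bar>f x\<bar> powr p + \<bar>g x\<bar> powr p))"
    using powr_sum_bound[of p] p by auto
qed measurable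

lemma minkowski:
  fixes f g :: "'a \<Rightarrow> real"
  assumes p: "1 \<le> p" and [measurable]: "f \<in> borel_measurable M" "g \<in> borel_measurable M"
    and If: "integrable M (\<lambda>x. \<bar>f x\<bar> powr p)" and Ig: "integrable M (\<lambda>x. \<bar>g x\<bar> powr p)"
  shows "(\<integral>x. \<bar>f x + g x\<bar> powr p \<partial>M) powr (1/p) \<le>
     (\<integral>x. \<bar>f x\<bar> powr p \<partial>M) powr (1/p) + (\<integral>x. \<bar>g x\<bar> powr p \<partial>M) powr (1/p)"
proof -
  define IF where "IF = (\<integral>x. \<bar>f x\<bar> powr p \<partial>M)"
  define IG where "IG = (\<integral>x. \<bar>g x\<bar> powr p \<partial>M)"
  define IH where "IH = (\<integral>x. \<bar>f x + g x\<bar> powr p \<partial>M)"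
  define a where "a = IF powr (1/p)"
  define b where "b = IG powr (1/p)"
  have IF0: "0 \<le> IF" and IG0: "0 \<le> IG" and IH0: "0 \<le> IH"
    unfolding IF_def IG_def IH_def by (auto intro!: integral_nonneg_AE)
  have IH: "integrable M (\<lambda>x. \<bar>f x + g x\<bar> powr p)" by (rule minkowski_integrable[OF p]) fact+
  have a0: "0 \<le> a" "0 \<le> b" unfolding a_def b_def by auto
  have aF: "a powr p = IF" "b powr p = IG" unfolding a_def b_def using IF0 IG0 p by (auto simp: powr_inv_powr)
  have "IH powr (1/p) \<le> a + b + e" if e: "0 < e" for e
  proof -
    define A where "A = a + e/2"
    define B where "B = b + e/2"
    define S where "S = A + B"
    define t where "t = A / S"
    have A0: "0 < A" "0 < B" "0 < S" using a0 e unfolding A_def B_def S_def by auto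
    have t01: "0 \<le> t" "t \<le> 1" using A0 unfolding t_def S_def by auto
    have t1: "1 - t = B / S" using A0 unfolding t_def S_def by (simp add: field_simps)
    have pw: "\<bar>f x + g x\<bar> powr p / S powr p \<le> t / A powr p * \<bar>f x\<bar> powr p + (1-t) / B powr p * \<bar>g x\<bar> powr p" for x
    proof -
      have "\<bar>f x + g x\<bar> / S \<le> t * (\<bar>f x\<bar>/A) + (1-t) * (\<bar>g x\<bar>/B)"
        using A0 unfolding t1 unfolding t_def by (simp add: divide_right_mono add_divide_distrib[symmetric])
      then have "(\<bar>f x + g x\<bar> / S) powr p \<le> (t * (\<bar>f x\<bar>/A) + (1-t) * (\<bar>g x\<bar>/B)) powr p"
        using p A0 by (intro powr_mono2) auto
      also have "\<dots> \<le> t * (\<bar>f x\<bar>/A) powr p + (1-t) * (\<bar>g x\<bar>/B) powr p"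
        using A0 t01 p by (intro powr_conv) auto
      finally show ?thesis using A0 by (simp add: powr_divide)
    qed
    have "IH / S powr p = (\<integral>x. \<bar>f x + g x\<bar> powr p / S powr p \<partial>M)" unfolding IH_def by simp
    also have "\<dots> \<le> (\<integral>x. t / A powr p * \<bar>f x\<bar> powr p + (1-t) / B powr p * \<bar>g x\<bar> powr p \<partial>M)"
      using IH If Ig pw by (intro integral_mono) auto
    also have "\<dots> = t / A powr p * IF + (1-t) / B powr p * IG"
      unfolding IF_def IG_def using If Ig by simp
    also have "\<dots> \<le> t + (1-t)"
    proof -
      have "a powr p \<le> A powr p" "b powr p \<le> B powr p" using a0 p unfolding A_def B_def
        by (auto intro!: powr_mono2 simp: e less_imp_le)
      then have "IF / A powr p \<le> 1" "IG / B powr p \<le> 1" using aF A0 by auto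
      then have h: "t * (IF / A powr p) \<le> t" "(1-t) * (IG / B powr p) \<le> 1 - t"
        using t01 by (intro mult_left_le; simp)+
      have "t / A powr p * IF = t * (IF / A powr p)" "(1-t) / B powr p * IG = (1-t) * (IG / B powr p)"
        by simp_all
      then show ?thesis using h by linarith
    qed
    finally have "IH \<le> S powr p" using A0 by (simp add: divide_le_eq)
    then have "IH powr (1/p) \<le> (S powr p) powr (1/p)" using IH0 p by (intro powr_mono2) auto
    also have "\<dots> = S" using A0 p by (simp add: powr_powr_inv)
    finally show ?thesis unfolding S_def A_def B_def by simp
  qed
  then have "IH powr (1/p) \<le> a + b" by (rule field_le_epsilon)
  then show ?thesis unfolding IH_def a_def b_def IF_def IG_def .
qed




context atl begin

lemma tail_eq:
  assumes e: "0 < e" "e < 1/2" and p: "0 < p"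
  shows "tail_moment p e M = (\<integral>z. \<bar>indicator ({0<..<e} \<union> {1-e<..<1}) z * Q z\<bar> powr p \<partial>\<Omega>)"
proof -
  let ?A = "{0<..<e} \<union> {1-e<..<1}"
  let ?I = "quantile_interval M e"
  have [measurable]: "?I \<in> sets borel" unfolding quantile_interval_def by simp
  have "tail_moment p e M = integral\<^sup>L M (\<lambda>x. indicator (- ?I) x * \<bar>x\<bar> powr p)"
    unfolding tail_moment_def set_lebesgue_integral_def by simp
  also have "\<dots> = (\<integral>z. indicator (- ?I) (Q z) * \<bar>Q z\<bar> powr p \<partial>\<Omega>)"
    by (rule integral_Q) measurable
  also have "\<dots> = (\<integral>z. \<bar>indicator ?A z * Q z\<bar> powr p \<partial>\<Omega>)"
  proof (rule Bochner_Integration.integral_cong[OF refl])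
    fix z assume "z \<in> space \<Omega>"
    then have z: "0 < z" "z < 1" by (auto simp: space_restrict_space)
    have "Q z \<in> ?I \<longleftrightarrow> z \<notin> ?A"
    proof
      assume "Q z \<in> ?I"
      then have "Q e \<le> Q z" "Q z \<le> Q (1-e)" unfolding quantile_interval_def by auto
      then show "z \<notin> ?A" using Q_strict[of z e] Q_strict[of "1-e" z] z e by force
    next
      assume "z \<notin> ?A"
      then have "e \<le> z" "z \<le> 1 - e" using z by auto
      then show "Q z \<in> ?I" unfolding quantile_interval_def using Q_mono z e
        by (auto simp: mono_on_def)
    qed
    then show "indicator (- ?I) (Q z) * \<bar>Q z\<bar> powr p = \<bar>indicator ?A z * Q z\<bar> powr p"
      by (auto simp: indicator_def)
  qed
  finally show ?thesis .
qed

lemma int_pow_Q: assumes "Pp p M" shows "integrable \<Omega> (\<lambda>z. \<bar>Q z\<bar> powr p)"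
  using assms unfolding Pp_def by (subst integrable_Q[symmetric]) auto

lemma ind_meas[measurable]: "(\<lambda>z. indicator ({0<..<e} \<union> {1-e<..<1}) z :: real) \<in> borel_measurable \<Omega>"
  by (rule measurable_restrict_space1) simp

lemma int_tail_Q:
  assumes "Pp p M" "0 < p"
  shows "integrable \<Omega> (\<lambda>z. \<bar>indicator ({0<..<e} \<union> {1-e<..<1}) z * Q z\<bar> powr p)"
proof (rule Bochner_Integration.integrable_bound[OF int_pow_Q[OF assms(1)]])
  show "AE x in \<Omega>. norm (\<bar>indicator ({0<..<e} \<union> {1-e<..<1}) x * Q x\<bar> powr p) \<le> norm (\<bar>Q x\<bar> powr p)"
    using assms(2) by (auto simp: indicator_def)
qed measurable

end

lemma part2:
  fixes \<epsilon> p :: real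
  assumes e: "0 < \<epsilon>" "\<epsilon> < 1/2" and p: "1 \<le> p"
  shows "\<forall>\<mu> \<nu>. Pp p \<mu> \<and> Pp p \<nu> \<and> atomless \<mu> \<and> atomless \<nu> \<longrightarrow>
        \<bar>tail_moment p \<epsilon> \<mu> powr (1/p) - tail_moment p \<epsilon> \<nu> powr (1/p)\<bar>
          \<le> (LINT z:({0<..<\<epsilon>} \<union> {1-\<epsilon><..<1})|lborel. \<bar>quantile \<mu> z - quantile \<nu> z\<bar> powr p) powr (1/p)"
proof (intro allI impI)
  fix \<mu> \<nu> assume H: "Pp p \<mu> \<and> Pp p \<nu> \<and> atomless \<mu> \<and> atomless \<nu>"
  interpret m: atl \<mu> using H unfolding atl_def atl_axioms_def Pp_def by auto
  interpret n: atl \<nu> using H unfolding atl_def atl_axioms_def Pp_def by auto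
  let ?A = "{0<..<\<epsilon>} \<union> {1-\<epsilon><..<1}"
  let ?\<Omega> = "restrict_space lborel {0<..<1::real}"
  define f where "f z = indicator ?A z * quantile \<mu> z" for z
  define g where "g z = indicator ?A z * quantile \<nu> z" for z
  have p0: "0 < p" using p by simp
  have [measurable]: "f \<in> borel_measurable ?\<Omega>" "g \<in> borel_measurable ?\<Omega>" unfolding f_def g_def by measurable
  have If: "integrable ?\<Omega> (\<lambda>z. \<bar>f z\<bar> powr p)" unfolding f_def using m.int_tail_Q H p0 by auto
  have Ig: "integrable ?\<Omega> (\<lambda>z. \<bar>g z\<bar> powr p)" unfolding g_def using n.int_tail_Q H p0 by auto
  have Im: "integrable ?\<Omega> (\<lambda>z. \<bar>- g z\<bar> powr p)" using Ig by simp
  have Ifg: "integrable ?\<Omega> (\<lambda>z. \<bar>f z - g z\<bar> powr p)"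
  proof -
    have "(\<lambda>z. - g z) \<in> borel_measurable ?\<Omega>" by measurable
    from minkowski_integrable[OF p _ this If Im] show ?thesis by simp
  qed
  have Igf: "integrable ?\<Omega> (\<lambda>z. \<bar>g z - f z\<bar> powr p)"
    using Ifg by (simp add: abs_minus_commute)
  have Tm: "tail_moment p \<epsilon> \<mu> = (\<integral>z. \<bar>f z\<bar> powr p \<partial>?\<Omega>)" unfolding f_def using m.tail_eq[OF e p0] .
  have Tn: "tail_moment p \<epsilon> \<nu> = (\<integral>z. \<bar>g z\<bar> powr p \<partial>?\<Omega>)" unfolding g_def using n.tail_eq[OF e p0] .
  define D where "D = (\<integral>z. \<bar>f z - g z\<bar> powr p \<partial>?\<Omega>)"
  have D': "(\<integral>z. \<bar>g z - f z\<bar> powr p \<partial>?\<Omega>) = D" unfolding D_def by (simp add: abs_minus_commute)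
  have 1: "tail_moment p \<epsilon> \<mu> powr (1/p) \<le> D powr (1/p) + tail_moment p \<epsilon> \<nu> powr (1/p)"
    using minkowski[OF p _ _ Ifg Ig] unfolding Tm Tn D_def by simp
  have 2: "tail_moment p \<epsilon> \<nu> powr (1/p) \<le> D powr (1/p) + tail_moment p \<epsilon> \<mu> powr (1/p)"
    using minkowski[OF p _ _ Igf If] unfolding Tm Tn D'[symmetric] by simp
  have "D = (LINT z|lborel. indicator {0<..<1} z *\<^sub>R (indicator ?A z * \<bar>quantile \<mu> z - quantile \<nu> z\<bar> powr p))"
    unfolding D_def
  proof (subst integral_restrict_space[symmetric])
    show "{0<..<1::real} \<inter> space lborel \<in> sets lborel" by simp
    show "(\<integral>z. \<bar>f z - g z\<bar> powr p \<partial>?\<Omega>) =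
      (\<integral>z. indicator ?A z * \<bar>quantile \<mu> z - quantile \<nu> z\<bar> powr p \<partial>?\<Omega>)"
      unfolding f_def g_def using p0 by (intro Bochner_Integration.integral_cong) (auto simp: indicator_def)
  qed
  also have "\<dots> = (LINT z:?A|lborel. \<bar>quantile \<mu> z - quantile \<nu> z\<bar> powr p)"
    unfolding set_lebesgue_integral_def using e
    by (intro Bochner_Integration.integral_cong) (auto simp: indicator_def)
  finally have DD: "D = \<dots>" .
  from 1 2 show "\<bar>tail_moment p \<epsilon> \<mu> powr (1/p) - tail_moment p \<epsilon> \<nu> powr (1/p)\<bar>
          \<le> (LINT z:?A|lborel. \<bar>quantile \<mu> z - quantile \<nu> z\<bar> powr p) powr (1/p)" unfolding DD by linarith
qed




lemma coupling_basic:
  assumes "\<pi> \<in> couplings \<mu> \<nu>"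
  shows "prob_space \<pi>" "sets \<pi> = sets borel" "distr \<pi> borel fst = \<mu>" "distr \<pi> borel snd = \<nu>"
  using assms unfolding couplings_def by auto

lemma coupling_meas:
  assumes "\<pi> \<in> couplings \<mu> \<nu>" "f \<in> borel_measurable (borel :: (real \<times> real) measure)"
  shows "f \<in> borel_measurable \<pi>"
  using assms(2) measurable_cong_sets[of \<pi> borel borel borel] coupling_basic(2)[OF assms(1)] by simp

lemma fst_meas: "fst \<in> borel_measurable (borel :: (real \<times> real) measure)"
  and snd_meas: "snd \<in> borel_measurable (borel :: (real \<times> real) measure)"
  by (auto intro!: borel_measurable_continuous_onI continuous_intros)

lemma coupling_fst:
  fixes g :: "real \<Rightarrow> real"
  assumes "\<pi> \<in> couplings \<mu> \<nu>" and [measurable]: "g \<in> borel_measurable borel"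
  shows "integral\<^sup>L \<pi> (\<lambda>z. g (fst z)) = integral\<^sup>L \<mu> g"
    "integrable \<pi> (\<lambda>z. g (fst z)) \<longleftrightarrow> integrable \<mu> g"
proof -
  have m: "fst \<in> \<pi> \<rightarrow>\<^sub>M borel" using coupling_meas[OF assms(1) fst_meas] by simp
  show "integral\<^sup>L \<pi> (\<lambda>z. g (fst z)) = integral\<^sup>L \<mu> g"
    using integral_distr[OF m assms(2)] coupling_basic(3)[OF assms(1)] by simp
  show "integrable \<pi> (\<lambda>z. g (fst z)) \<longleftrightarrow> integrable \<mu> g"
    using integrable_distr_eq[OF m assms(2)] coupling_basic(3)[OF assms(1)] by simp
qed

lemma coupling_snd:
  fixes g :: "real \<Rightarrow> real"
  assumes "\<pi> \<in> couplings \<mu> \<nu>" and [measurable]: "g \<in> borel_measurable borel"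
  shows "integral\<^sup>L \<pi> (\<lambda>z. g (snd z)) = integral\<^sup>L \<nu> g"
    "integrable \<pi> (\<lambda>z. g (snd z)) \<longleftrightarrow> integrable \<nu> g"
proof -
  have m: "snd \<in> \<pi> \<rightarrow>\<^sub>M borel" using coupling_meas[OF assms(1) snd_meas] by simp
  show "integral\<^sup>L \<pi> (\<lambda>z. g (snd z)) = integral\<^sup>L \<nu> g"
    using integral_distr[OF m assms(2)] coupling_basic(4)[OF assms(1)] by simp
  show "integrable \<pi> (\<lambda>z. g (snd z)) \<longleftrightarrow> integrable \<nu> g"
    using integrable_distr_eq[OF m assms(2)] coupling_basic(4)[OF assms(1)] by simp
qed

lemma prod_coupling:
  assumes m: "real_distribution \<mu>" and n: "real_distribution \<nu>"
  shows "\<mu> \<Otimes>\<^sub>M \<nu> \<in> couplings \<mu> \<nu>"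
proof -
  interpret m: real_distribution \<mu> by fact
  interpret n: real_distribution \<nu> by fact
  interpret pair_prob_space \<mu> \<nu> ..
  have s: "sets (\<mu> \<Otimes>\<^sub>M \<nu>) = sets (borel :: (real \<times> real) measure)"
    by (subst borel_prod[symmetric]) (intro sets_pair_measure_cong; simp)
  have "distr (\<mu> \<Otimes>\<^sub>M \<nu>) borel fst = distr (\<mu> \<Otimes>\<^sub>M \<nu>) \<mu> fst"
    by (rule distr_cong) auto
  also have "\<dots> = \<mu>" by (rule n.distr_pair_fst)
  finally have 1: "distr (\<mu> \<Otimes>\<^sub>M \<nu>) borel fst = \<mu>" .
  have 2: "distr (\<mu> \<Otimes>\<^sub>M \<nu>) borel snd = \<nu>"
  proof (rule measure_eqI)
    show "sets (distr (\<mu> \<Otimes>\<^sub>M \<nu>) borel snd) = sets \<nu>" by simp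
    fix A assume "A \<in> sets (distr (\<mu> \<Otimes>\<^sub>M \<nu>) borel snd)"
    then have A: "A \<in> sets \<nu>" by simp
    have "emeasure (distr (\<mu> \<Otimes>\<^sub>M \<nu>) borel snd) A = emeasure (\<mu> \<Otimes>\<^sub>M \<nu>) (snd -` A \<inter> space (\<mu> \<Otimes>\<^sub>M \<nu>))"
      using A by (subst emeasure_distr) auto
    also have "snd -` A \<inter> space (\<mu> \<Otimes>\<^sub>M \<nu>) = space \<mu> \<times> A"
      using A sets.sets_into_space[OF A] by (auto simp: space_pair_measure)
    also have "emeasure (\<mu> \<Otimes>\<^sub>M \<nu>) (space \<mu> \<times> A) = emeasure \<mu> (space \<mu>) * emeasure \<nu> A"
      using A by (intro n.emeasure_pair_measure_Times) auto
    finally show "emeasure (distr (\<mu> \<Otimes>\<^sub>M \<nu>) borel snd) A = emeasure \<nu> A"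
      using m.emeasure_space_1 by (simp add: m.space_eq_univ)
  qed
  show ?thesis unfolding couplings_def using s 1 2 prob_space_pair[OF m.prob_space_axioms n.prob_space_axioms]
    by auto
qed

lemma coupling_cost_int:
  assumes c: "\<pi> \<in> couplings \<mu> \<nu>" and "Pp p \<mu>" "Pp p \<nu>" and p: "1 \<le> p"
  shows "integrable \<pi> (\<lambda>z. \<bar>fst z - snd z\<bar> powr p)"
proof -
  have [measurable]: "fst \<in> borel_measurable \<pi>" "snd \<in> borel_measurable \<pi>" "(\<lambda>z. - snd z) \<in> borel_measurable \<pi>"
    using coupling_meas[OF c] fst_meas snd_meas by auto
  have "integrable \<pi> (\<lambda>z. \<bar>fst z\<bar> powr p)"
    using coupling_fst(2)[OF c, of "\<lambda>x. \<bar>x\<bar> powr p"] assms unfolding Pp_def by auto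
  moreover have "integrable \<pi> (\<lambda>z. \<bar>- snd z\<bar> powr p)"
    using coupling_snd(2)[OF c, of "\<lambda>x. \<bar>x\<bar> powr p"] assms unfolding Pp_def by auto
  ultimately show ?thesis using minkowski_integrable[OF p, of fst \<pi> "\<lambda>z. - snd z"] by simp
qed

lemma markov_cdf:
  fixes u v :: "'a \<Rightarrow> real"
  assumes "prob_space \<pi>" and [measurable]: "u \<in> borel_measurable \<pi>" "v \<in> borel_measurable \<pi>"
    and I: "integrable \<pi> (\<lambda>z. \<bar>u z - v z\<bar> powr p)" and d: "0 < \<delta>" and p: "0 < p"
  shows "measure \<pi> {z\<in>space \<pi>. u z \<le> x} \<le> measure \<pi> {z\<in>space \<pi>. v z \<le> x + \<delta>}
      + (\<integral>z. \<bar>u z - v z\<bar> powr p \<partial>\<pi>) / \<delta> powr p"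
proof -
  interpret prob_space \<pi> by fact
  have sub: "{z\<in>space \<pi>. u z \<le> x} \<subseteq> {z\<in>space \<pi>. v z \<le> x + \<delta>} \<union> {z\<in>space \<pi>. \<delta> powr p \<le> \<bar>u z - v z\<bar> powr p}"
  proof
    fix z assume z: "z \<in> {z\<in>space \<pi>. u z \<le> x}"
    show "z \<in> {z\<in>space \<pi>. v z \<le> x + \<delta>} \<union> {z\<in>space \<pi>. \<delta> powr p \<le> \<bar>u z - v z\<bar> powr p}"
    proof (cases "v z \<le> x + \<delta>")
      case False
      then have "\<delta> \<le> \<bar>u z - v z\<bar>" using z by auto
      then have "\<delta> powr p \<le> \<bar>u z - v z\<bar> powr p" using d p by (intro powr_mono2) auto
      then show ?thesis using z by auto
    qed (use z in auto)
  qed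
  have "measure \<pi> {z\<in>space \<pi>. u z \<le> x} \<le> measure \<pi> ({z\<in>space \<pi>. v z \<le> x + \<delta>} \<union> {z\<in>space \<pi>. \<delta> powr p \<le> \<bar>u z - v z\<bar> powr p})"
    by (intro finite_measure_mono sub) measurable
  also have "\<dots> \<le> measure \<pi> {z\<in>space \<pi>. v z \<le> x + \<delta>} + measure \<pi> {z\<in>space \<pi>. \<delta> powr p \<le> \<bar>u z - v z\<bar> powr p}"
    by (intro measure_Un_le) measurable
  also have "measure \<pi> {z\<in>space \<pi>. \<delta> powr p \<le> \<bar>u z - v z\<bar> powr p} \<le> (\<integral>z. \<bar>u z - v z\<bar> powr p \<partial>\<pi>) / \<delta> powr p"
    using integral_Markov_inequality_measure[OF I, of "space \<pi>" "\<delta> powr p"] d by auto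
  finally show ?thesis by simp
qed

lemma coupling_cdf:
  assumes c: "\<pi> \<in> couplings \<mu> \<nu>"
  shows "measure \<pi> {z\<in>space \<pi>. fst z \<le> x} = cdf \<mu> x" "measure \<pi> {z\<in>space \<pi>. snd z \<le> x} = cdf \<nu> x"
proof -
  have m: "fst \<in> \<pi> \<rightarrow>\<^sub>M borel" "snd \<in> \<pi> \<rightarrow>\<^sub>M borel" using coupling_meas[OF c] fst_meas snd_meas by auto
  have "cdf \<mu> x = measure (distr \<pi> borel fst) {..x}" unfolding cdf_def coupling_basic(3)[OF c] ..
  also have "\<dots> = measure \<pi> {z\<in>space \<pi>. fst z \<le> x}"
    using m by (subst measure_distr) (auto intro!: arg_cong2[where f=measure])
  finally show "measure \<pi> {z\<in>space \<pi>. fst z \<le> x} = cdf \<mu> x" ..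
  have "cdf \<nu> x = measure (distr \<pi> borel snd) {..x}" unfolding cdf_def coupling_basic(4)[OF c] ..
  also have "\<dots> = measure \<pi> {z\<in>space \<pi>. snd z \<le> x}"
    using m by (subst measure_distr) (auto intro!: arg_cong2[where f=measure])
  finally show "measure \<pi> {z\<in>space \<pi>. snd z \<le> x} = cdf \<nu> x" ..
qed




lemma fatou_real:
  fixes u :: "nat \<Rightarrow> 'a \<Rightarrow> real"
  assumes I: "\<And>n. integrable M (u n)" and nn: "\<And>n x. x \<in> space M \<Longrightarrow> 0 \<le> u n x"
    and If: "integrable M f" and conv: "AE x in M. (\<lambda>n. u n x) \<longlonglongrightarrow> f x"
    and c: "c < integral\<^sup>L M f"
  shows "eventually (\<lambda>n. c < integral\<^sup>L M (u n)) sequentially"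
proof (cases "c < 0")
  case True
  have "0 \<le> integral\<^sup>L M (u n)" for n using nn by (intro integral_nonneg_AE) auto
  then have "\<forall>n. c < integral\<^sup>L M (u n)" using True by (metis less_le_trans)
  then show ?thesis by (simp add: always_eventually)
next
  case False
  have f0: "AE x in M. 0 \<le> f x"
    using conv AE_space
  proof eventually_elim
    case (elim x)
    show "0 \<le> f x" by (rule tendsto_lowerbound[OF elim(1)]) (use nn elim(2) in auto)
  qed
  have "ennreal c < ennreal (integral\<^sup>L M f)" using False c by (simp add: ennreal_lessI)
  also have "\<dots> = (\<integral>\<^sup>+x. ennreal (f x) \<partial>M)" using nn_integral_eq_integral[OF If f0] ..
  also have "\<dots> = (\<integral>\<^sup>+x. liminf (\<lambda>n. ennreal (u n x)) \<partial>M)"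
  proof (rule nn_integral_cong_AE)
    show "AE x in M. ennreal (f x) = liminf (\<lambda>n. ennreal (u n x))"
      using conv by eventually_elim (metis lim_imp_Liminf tendsto_ennrealI trivial_limit_sequentially)
  qed
  also have "\<dots> \<le> liminf (\<lambda>n. \<integral>\<^sup>+x. ennreal (u n x) \<partial>M)"
    using I by (intro nn_integral_liminf) auto
  also have "\<dots> = liminf (\<lambda>n. ennreal (integral\<^sup>L M (u n)))"
    using I nn by (subst nn_integral_eq_integral) auto
  finally have "\<forall>\<^sub>F n in sequentially. ennreal c < ennreal (integral\<^sup>L M (u n))"
    by (rule less_LiminfD)
  then show ?thesis by eventually_elim (use False in \<open>simp add: ennreal_less_iff\<close>)
qed



lemma quantile_conv:
  assumes M: "atl \<mu>" and Mn: "\<And>n. atl (\<mu>s n)" and cdfc: "\<And>x. (\<lambda>n. cdf (\<mu>s n) x) \<longlonglongrightarrow> cdf \<mu> x"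
    and z: "0 < z" "z < 1" and cont: "isCont (quantile \<mu>) z"
  shows "(\<lambda>n. quantile (\<mu>s n) z) \<longlonglongrightarrow> quantile \<mu> z"
proof (rule order_tendstoI)
  interpret M: atl \<mu> by fact
  fix a assume a: "quantile \<mu> z < a"
  have "(quantile \<mu> \<longlongrightarrow> quantile \<mu> z) (at_right z)"
    using cont by (simp add: continuous_at filterlim_at_split)
  then have "eventually (\<lambda>w. quantile \<mu> w < a) (at_right z)"
    using order_tendstoD(2)[OF _ a] by blast
  moreover have "eventually (\<lambda>w. w < 1) (at_right z)"
    using z by (auto simp: eventually_at_right_field intro!: exI[of _ 1])
  ultimately have "eventually (\<lambda>w. quantile \<mu> w < a \<and> w < 1 \<and> z < w) (at_right z)"
    using eventually_at_right_less[of z] by eventually_elim auto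
  then obtain w where w: "quantile \<mu> w < a" "w < 1" "z < w"
    using eventually_happens'[OF trivial_limit_at_right_real] by blast
  then have "w < cdf \<mu> a" using M.Q_less_iff[of w a] z by auto
  then have "z < cdf \<mu> a" using w by auto
  then have "eventually (\<lambda>n. z < cdf (\<mu>s n) a) sequentially"
    by (rule order_tendstoD(1)[OF cdfc])
  then show "eventually (\<lambda>n. quantile (\<mu>s n) z < a) sequentially"
  proof eventually_elim
    case (elim n)
    then show ?case using atl.Q_less_iff[OF Mn z, of n a] by auto
  qed
next
  interpret M: atl \<mu> by fact
  fix a assume a: "a < quantile \<mu> z"
  have "(quantile \<mu> \<longlongrightarrow> quantile \<mu> z) (at_left z)"
    using cont by (simp add: continuous_at filterlim_at_split)
  then have "eventually (\<lambda>w. a < quantile \<mu> w) (at_left z)"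
    using order_tendstoD(1)[OF _ a] by blast
  moreover have "eventually (\<lambda>w. 0 < w \<and> w < z) (at_left z)"
    unfolding eventually_at_left_field using z by (intro exI[of _ 0]) auto
  ultimately have "eventually (\<lambda>w. a < quantile \<mu> w \<and> 0 < w \<and> w < z) (at_left z)"
    by eventually_elim auto
  then obtain w where w: "a < quantile \<mu> w" "0 < w" "w < z"
    using eventually_happens'[OF trivial_limit_at_left_real] by blast
  define a' where "a' = (a + quantile \<mu> w) / 2"
  have a': "a < a'" "a' < quantile \<mu> w" using w unfolding a'_def by auto
  then have "cdf \<mu> a' \<le> w" using M.Q_less_iff[of w a'] w z by auto
  then have "cdf \<mu> a' < z" using w by auto
  then have "eventually (\<lambda>n. cdf (\<mu>s n) a' < z) sequentially"
    by (rule order_tendstoD(2)[OF cdfc])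
  then show "eventually (\<lambda>n. a < quantile (\<mu>s n) z) sequentially"
  proof eventually_elim
    case (elim n)
    then have "\<not> quantile (\<mu>s n) z < a'" using atl.Q_less_iff[OF Mn z, of n a'] by auto
    then show ?case using a' by auto
  qed
qed




context atl begin
lemma int_ind_Q:
  assumes S: "S \<in> sets borel" and "Pp p M" "0 < p"
  shows "integrable \<Omega> (\<lambda>z. \<bar>indicator S z * Q z\<bar> powr p)"
proof (rule Bochner_Integration.integrable_bound[OF int_pow_Q[OF assms(2)]])
  have "(\<lambda>z. indicator S z :: real) \<in> borel_measurable \<Omega>"
    by (rule measurable_restrict_space1) (use S in simp)
  then show "(\<lambda>z. \<bar>indicator S z * Q z\<bar> powr p) \<in> borel_measurable \<Omega>" by measurable
  show "AE x in \<Omega>. norm (\<bar>indicator S x * Q x\<bar> powr p) \<le> norm (\<bar>Q x\<bar> powr p)"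
    using assms(3) by (auto simp: indicator_def)
qed
end

lemma part3:
  fixes \<epsilon> p :: real
  assumes e: "0 < \<epsilon>" "\<epsilon> < 1/2" and p: "1 \<le> p"
  shows "\<forall>(\<mu>s :: nat \<Rightarrow> real measure) \<mu>. (\<forall>n. Pp p (\<mu>s n) \<and> atomless (\<mu>s n)) \<and> Pp p \<mu> \<and> atomless \<mu> \<and>
        (\<lambda>n. wasserstein p (\<mu>s n) \<mu>) \<longlonglongrightarrow> 0 \<longrightarrow>
        (\<lambda>n. tail_moment p \<epsilon> (\<mu>s n)) \<longlonglongrightarrow> tail_moment p \<epsilon> \<mu>"
proof (intro allI impI)
  fix \<mu>s :: "nat \<Rightarrow> real measure" and \<mu>
  assume H: "(\<forall>n. Pp p (\<mu>s n) \<and> atomless (\<mu>s n)) \<and> Pp p \<mu> \<and> atomless \<mu> \<and>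
        (\<lambda>n. wasserstein p (\<mu>s n) \<mu>) \<longlonglongrightarrow> 0"
  have p0: "0 < p" using p by simp
  have Ppn: "\<And>n. Pp p (\<mu>s n)" and PpM: "Pp p \<mu>" and Wc: "(\<lambda>n. wasserstein p (\<mu>s n) \<mu>) \<longlonglongrightarrow> 0"
    using H by auto
  have rdn: "\<And>n. real_distribution (\<mu>s n)" and rdM: "real_distribution \<mu>"
    using Ppn PpM unfolding Pp_def by auto
  have atn: "\<And>n. atl (\<mu>s n)" using H unfolding atl_def atl_axioms_def Pp_def by auto
  have atM: "atl \<mu>" using H unfolding atl_def atl_axioms_def Pp_def by auto
  interpret M: atl \<mu> by (rule atM)
  define cost where "cost z = \<bar>fst z - snd z\<bar> powr p" for z :: "real \<times> real"
  define K where "K n = (INF \<pi>\<in>couplings (\<mu>s n) \<mu>. \<integral>\<^sup>+ z. ennreal (cost z) \<partial>\<pi>)" for n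
  define c where "c n = enn2real (K n)" for n
  have Kfin: "K n = ennreal (c n)" for n
  proof -
    have pc: "\<mu>s n \<Otimes>\<^sub>M \<mu> \<in> couplings (\<mu>s n) \<mu>" by (rule prod_coupling[OF rdn rdM])
    have "K n \<le> (\<integral>\<^sup>+ z. ennreal (cost z) \<partial>(\<mu>s n \<Otimes>\<^sub>M \<mu>))" unfolding K_def by (rule INF_lower[OF pc])
    also have "\<dots> = ennreal (\<integral> z. cost z \<partial>(\<mu>s n \<Otimes>\<^sub>M \<mu>))"
      unfolding cost_def by (rule nn_integral_eq_integral[OF coupling_cost_int[OF pc Ppn PpM p]]) auto
    finally have "K n < top" using ennreal_less_top le_less_trans by blast
    then show ?thesis unfolding c_def by (simp add: ennreal_enn2real less_top)
  qed
  have c0: "0 \<le> c n" for n unfolding c_def by simp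
  have Wn: "wasserstein p (\<mu>s n) \<mu> = c n powr (1/p)" for n
    unfolding wasserstein_def K_def c_def cost_def by simp
  have cconv: "c \<longlonglongrightarrow> 0"
  proof -
    have "(\<lambda>n. (wasserstein p (\<mu>s n) \<mu>) powr p) \<longlonglongrightarrow> 0"
      by (rule tendsto_zero_powrI[OF Wc tendsto_const]) (auto simp: p0 Wn)
    moreover have "(wasserstein p (\<mu>s n) \<mu>) powr p = c n" for n
      unfolding Wn using c0 p by (simp add: powr_inv_powr)
    ultimately show ?thesis by simp
  qed
  define d where "d n = c n + inverse (real (Suc n))" for n
  have dconv: "d \<longlonglongrightarrow> 0" unfolding d_def using tendsto_add[OF cconv LIMSEQ_inverse_real_of_nat] by simp
  have d0: "0 \<le> d n" for n using c0[of n] unfolding d_def by (simp add: add_nonneg_nonneg)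
  have "\<exists>\<pi>. \<pi> \<in> couplings (\<mu>s n) \<mu> \<and> (\<integral>\<^sup>+ z. ennreal (cost z) \<partial>\<pi>) < ennreal (d n)" for n
  proof -
    have "c n < d n" unfolding d_def by simp
    then have "K n < ennreal (d n)" unfolding Kfin using c0[of n] by (simp add: ennreal_less_iff)
    then show ?thesis unfolding K_def INF_less_iff by blast
  qed
  then obtain \<pi> where \<pi>: "\<And>n. \<pi> n \<in> couplings (\<mu>s n) \<mu>"
    and \<pi>c: "\<And>n. (\<integral>\<^sup>+ z. ennreal (cost z) \<partial>\<pi> n) < ennreal (d n)" by metis
  define Cs where "Cs n = (\<integral> z. cost z \<partial>\<pi> n)" for n
  have Icost: "integrable (\<pi> n) cost" for n unfolding cost_def by (rule coupling_cost_int[OF \<pi> Ppn PpM p])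
  have Cs0: "0 \<le> Cs n" for n unfolding Cs_def cost_def by (intro integral_nonneg_AE) auto
  have Csd: "Cs n < d n" for n
  proof -
    have "ennreal (Cs n) = (\<integral>\<^sup>+ z. ennreal (cost z) \<partial>\<pi> n)"
      unfolding Cs_def by (rule nn_integral_eq_integral[OF Icost, symmetric]) (auto simp: cost_def)
    with \<pi>c[of n] have "ennreal (Cs n) < ennreal (d n)" by simp
    then show ?thesis using Cs0[of n] ennreal_less_iff by blast
  qed
  have mf [measurable]: "fst \<in> borel_measurable (\<pi> n)" "snd \<in> borel_measurable (\<pi> n)" for n
    using coupling_meas[OF \<pi>] fst_meas snd_meas by auto
  have ps: "prob_space (\<pi> n)" for n by (rule coupling_basic(1)[OF \<pi>])
  have I2: "integrable (\<pi> n) (\<lambda>z. \<bar>snd z - fst z\<bar> powr p)" for n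
    using Icost unfolding cost_def by (simp add: abs_minus_commute)
  have I1: "integrable (\<pi> n) (\<lambda>z. \<bar>fst z - snd z\<bar> powr p)" for n
    using Icost unfolding cost_def by simp
  have Cs2: "(\<integral>z. \<bar>snd z - fst z\<bar> powr p \<partial>\<pi> n) = Cs n" for n
    unfolding Cs_def cost_def by (simp add: abs_minus_commute)

  have cdfc: "(\<lambda>n. cdf (\<mu>s n) x) \<longlonglongrightarrow> cdf \<mu> x" for x
  proof (rule tendstoI)
    fix e :: real assume e: "0 < e"
    obtain \<delta>0 where \<delta>0: "\<delta>0 > 0" "\<And>y. dist y x < \<delta>0 \<Longrightarrow> dist (cdf \<mu> y) (cdf \<mu> x) < e/2"
      using M.C_cont[of x] e unfolding continuous_at_eps_delta by (meson half_gt_zero)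
    define \<delta> where "\<delta> = \<delta>0/2"
    have \<delta>: "0 < \<delta>" using \<delta>0 by (simp add: \<delta>_def)
    have F1: "cdf \<mu> (x+\<delta>) < cdf \<mu> x + e/2" and F2: "cdf \<mu> x - e/2 < cdf \<mu> (x - \<delta>)"
    proof -
      have "dist (x+\<delta>) x < \<delta>0" "dist (x-\<delta>) x < \<delta>0" using \<delta>0 unfolding \<delta>_def dist_real_def by auto
      then have "dist (cdf \<mu> (x+\<delta>)) (cdf \<mu> x) < e/2" "dist (cdf \<mu> (x-\<delta>)) (cdf \<mu> x) < e/2"
        using \<delta>0(2) by blast+
      then show "cdf \<mu> (x+\<delta>) < cdf \<mu> x + e/2" "cdf \<mu> x - e/2 < cdf \<mu> (x - \<delta>)"
        unfolding dist_real_def abs_less_iff by linarith+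
    qed
    have "0 < e/2 * \<delta> powr p" using e \<delta> by simp
    from order_tendstoD(2)[OF dconv this]
    have "eventually (\<lambda>n. d n < e/2 * \<delta> powr p) sequentially" .
    then show "eventually (\<lambda>n. dist (cdf (\<mu>s n) x) (cdf \<mu> x) < e) sequentially"
    proof eventually_elim
      case (elim n)
      have "Cs n < e/2 * \<delta> powr p" using elim Csd[of n] by linarith
      then have cs: "Cs n / \<delta> powr p < e/2" using \<delta> by (simp add: divide_less_eq)
      have "cdf (\<mu>s n) x \<le> cdf \<mu> (x + \<delta>) + Cs n / \<delta> powr p"
        using markov_cdf[OF ps mf(1) mf(2) I1 \<delta> p0, of n x] unfolding Cs_def cost_def coupling_cdf[OF \<pi>] .
      moreover have "cdf \<mu> (x - \<delta>) \<le> cdf (\<mu>s n) x + Cs n / \<delta> powr p"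
        using markov_cdf[OF ps mf(2) mf(1) I2 \<delta> p0, of n "x - \<delta>"] unfolding coupling_cdf[OF \<pi>] Cs2 by simp
      ultimately show ?case using F1 F2 cs unfolding dist_real_def abs_less_iff by linarith
    qed
  qed

  let ?\<Omega> = "restrict_space lborel {0<..<1::real}"
  have aeQ: "AE z in ?\<Omega>. (\<lambda>n. quantile (\<mu>s n) z) \<longlonglongrightarrow> quantile \<mu> z"
  proof -
    let ?D = "{z \<in> {0<..<1}. \<not> continuous (at z within {0<..<1}) (quantile \<mu>)}"
    have cD: "countable ?D" by (rule mono_on_ctble_discont[OF M.Q_mono])
    have "?D \<in> null_sets ?\<Omega>"
      using countable_imp_null_set_lborel[OF cD] by (subst null_sets_restrict_space) auto
    then show ?thesis
    proof (rule AE_I')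
      show "{z \<in> space ?\<Omega>. \<not> (\<lambda>n. quantile (\<mu>s n) z) \<longlonglongrightarrow> quantile \<mu> z} \<subseteq> ?D"
      proof
        fix z assume zz: "z \<in> {z \<in> space ?\<Omega>. \<not> (\<lambda>n. quantile (\<mu>s n) z) \<longlonglongrightarrow> quantile \<mu> z}"
        then have z: "0 < z" "z < 1" and nc: "\<not> (\<lambda>n. quantile (\<mu>s n) z) \<longlonglongrightarrow> quantile \<mu> z"
          by (auto simp: space_restrict_space)
        have "\<not> isCont (quantile \<mu>) z" using quantile_conv[OF atM atn cdfc z] nc by blast
        then have "\<not> continuous (at z within {0<..<1}) (quantile \<mu>)"
          using at_within_open[of z "{0<..<1::real}"] z by simp
        then show "z \<in> ?D" using z by auto
      qed
    qed
  qed

  define m where "m n = (\<integral>x. \<bar>x\<bar> powr p \<partial>\<mu>s n)" for n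
  define m0 where "m0 = (\<integral>x. \<bar>x\<bar> powr p \<partial>\<mu>)"
  have m_nn: "0 \<le> m n" for n unfolding m_def by (intro integral_nonneg_AE) auto
  have m0_nn: "0 \<le> m0" unfolding m0_def by (intro integral_nonneg_AE) auto
  have mconv: "m \<longlonglongrightarrow> m0"
  proof -
    have bd: "norm (m n powr (1/p) - m0 powr (1/p)) \<le> d n powr (1/p)" for n
    proof -
      have Ifst: "integrable (\<pi> n) (\<lambda>z. \<bar>fst z\<bar> powr p)"
        using coupling_fst(2)[OF \<pi>, of "\<lambda>x. \<bar>x\<bar> powr p"] Ppn unfolding Pp_def by auto
      have Isnd: "integrable (\<pi> n) (\<lambda>z. \<bar>snd z\<bar> powr p)"
        using coupling_snd(2)[OF \<pi>, of "\<lambda>x. \<bar>x\<bar> powr p"] PpM unfolding Pp_def by auto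
      have efst: "(\<integral>z. \<bar>fst z\<bar> powr p \<partial>\<pi> n) = m n" unfolding m_def by (rule coupling_fst(1)[OF \<pi>]) auto
      have esnd: "(\<integral>z. \<bar>snd z\<bar> powr p \<partial>\<pi> n) = m0" unfolding m0_def by (rule coupling_snd(1)[OF \<pi>]) auto
      have f1: "(\<lambda>z. fst z - snd z) \<in> borel_measurable (\<pi> n)" "(\<lambda>z. snd z - fst z) \<in> borel_measurable (\<pi> n)"
        by measurable
      have 1: "m n powr (1/p) \<le> Cs n powr (1/p) + m0 powr (1/p)"
        using minkowski[OF p f1(1) mf(2) I1 Isnd] unfolding Cs_def cost_def by (simp add: efst esnd)
      have 2: "m0 powr (1/p) \<le> Cs n powr (1/p) + m n powr (1/p)"
        using minkowski[OF p f1(2) mf(1) I2 Ifst] by (simp add: efst esnd Cs2)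
      have 3: "Cs n powr (1/p) \<le> d n powr (1/p)" using Csd[of n] Cs0[of n] p0
        by (intro powr_mono2) auto
      show ?thesis using 1 2 3 by simp
    qed
    have "(\<lambda>n. d n powr (1/p)) \<longlonglongrightarrow> 0"
      by (rule tendsto_zero_powrI[OF dconv tendsto_const]) (auto simp: d0 p0)
    then have "(\<lambda>n. m n powr (1/p) - m0 powr (1/p)) \<longlonglongrightarrow> 0"
      by (rule Lim_null_comparison[rotated]) (use bd in auto)
    then have r: "(\<lambda>n. m n powr (1/p)) \<longlonglongrightarrow> m0 powr (1/p)" by (simp add: LIM_zero_iff)
    have "(\<lambda>n. (m n powr (1/p)) powr p) \<longlonglongrightarrow> (m0 powr (1/p)) powr p"
      by (rule tendsto_powr2[OF r tendsto_const]) (auto simp: p0)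
    then show ?thesis using m_nn m0_nn p by (simp add: powr_inv_powr)
  qed

  let ?A = "{0<..<\<epsilon>} \<union> {1-\<epsilon><..<1}"
  have Ab: "?A \<in> sets borel" "- ?A \<in> sets borel" by auto
  have Fat: "eventually (\<lambda>n. y < (\<integral>z. \<bar>indicator S z * quantile (\<mu>s n) z\<bar> powr p \<partial>?\<Omega>)) sequentially"
    if S: "S \<in> sets borel" and y: "y < (\<integral>z. \<bar>indicator S z * quantile \<mu> z\<bar> powr p \<partial>?\<Omega>)" for S y
  proof -
    have I: "integrable ?\<Omega> (\<lambda>z. \<bar>indicator S z * quantile (\<mu>s n) z\<bar> powr p)" for n
      by (rule atl.int_ind_Q[OF atn S Ppn p0])
    have If: "integrable ?\<Omega> (\<lambda>z. \<bar>indicator S z * quantile \<mu> z\<bar> powr p)"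
      by (rule M.int_ind_Q[OF S PpM p0])
    have cv: "AE z in ?\<Omega>. (\<lambda>n. \<bar>indicator S z * quantile (\<mu>s n) z\<bar> powr p) \<longlonglongrightarrow> \<bar>indicator S z * quantile \<mu> z\<bar> powr p"
      using aeQ
    proof eventually_elim
      case (elim z)
      show ?case
        by (rule tendsto_powr2[OF tendsto_rabs[OF tendsto_mult[OF tendsto_const elim]] tendsto_const]) (auto simp: p0)
    qed
    show ?thesis
      by (rule fatou_real[where f="\<lambda>z. \<bar>indicator S z * quantile \<mu> z\<bar> powr p", OF I _ If cv y]) simp
  qed
  define a where "a n = (\<integral>z. \<bar>indicator ?A z * quantile (\<mu>s n) z\<bar> powr p \<partial>?\<Omega>)" for n
  define b where "b n = (\<integral>z. \<bar>indicator (- ?A) z * quantile (\<mu>s n) z\<bar> powr p \<partial>?\<Omega>)" for n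
  define a0 where "a0 = (\<integral>z. \<bar>indicator ?A z * quantile \<mu> z\<bar> powr p \<partial>?\<Omega>)"
  define b0 where "b0 = (\<integral>z. \<bar>indicator (- ?A) z * quantile \<mu> z\<bar> powr p \<partial>?\<Omega>)"
  have tn: "tail_moment p \<epsilon> (\<mu>s n) = a n" for n unfolding a_def by (rule atl.tail_eq[OF atn e p0])
  have t0: "tail_moment p \<epsilon> \<mu> = a0" unfolding a0_def by (rule M.tail_eq[OF e p0])
  have spl: "\<bar>indicator ?A z * q\<bar> powr p + \<bar>indicator (- ?A) z * q\<bar> powr p = \<bar>q\<bar> powr p" for z q :: real
    by (auto simp: indicator_def)
  have abm: "a n + b n = m n" for n
  proof -
    have "a n + b n = (\<integral>z. \<bar>indicator ?A z * quantile (\<mu>s n) z\<bar> powr p + \<bar>indicator (- ?A) z * quantile (\<mu>s n) z\<bar> powr p \<partial>?\<Omega>)"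
      unfolding a_def b_def
      by (rule Bochner_Integration.integral_add[symmetric]; rule atl.int_ind_Q[OF atn _ Ppn p0]) (use Ab in auto)
    also have "\<dots> = (\<integral>z. \<bar>quantile (\<mu>s n) z\<bar> powr p \<partial>?\<Omega>)" by (simp only: spl)
    also have "\<dots> = m n" unfolding m_def by (rule atl.integral_Q[OF atn, symmetric]) auto
    finally show ?thesis .
  qed
  have ab0: "a0 + b0 = m0"
  proof -
    have "a0 + b0 = (\<integral>z. \<bar>indicator ?A z * quantile \<mu> z\<bar> powr p + \<bar>indicator (- ?A) z * quantile \<mu> z\<bar> powr p \<partial>?\<Omega>)"
      unfolding a0_def b0_def
      by (rule Bochner_Integration.integral_add[symmetric]; rule M.int_ind_Q[OF _ PpM p0]) (use Ab in auto)
    also have "\<dots> = (\<integral>z. \<bar>quantile \<mu> z\<bar> powr p \<partial>?\<Omega>)" by (simp only: spl)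
    also have "\<dots> = m0" unfolding m0_def by (rule M.integral_Q[symmetric]) auto
    finally show ?thesis .
  qed
  show "(\<lambda>n. tail_moment p \<epsilon> (\<mu>s n)) \<longlonglongrightarrow> tail_moment p \<epsilon> \<mu>"
    unfolding tn t0
  proof (rule order_tendstoI)
    fix y assume "y < a0"
    then show "eventually (\<lambda>n. y < a n) sequentially" unfolding a_def a0_def by (rule Fat[OF Ab(1)])
  next
    fix y assume y: "a0 < y"
    define h where "h = (y - a0)/2"
    have h: "0 < h" using y by (simp add: h_def)
    have test: "m k - b k < (m0 + h) - (b0 - h)" if "b0 - h < b k" "m k < m0 + h" for k
      using that by linarith
    have hy: "m0 + h - (b0 - h) = y" using ab0 unfolding h_def by simp
    have "eventually (\<lambda>n. b0 - h < b n) sequentially"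
      unfolding b_def b0_def by (rule Fat[OF Ab(2)]) (use h b0_def in simp)
    moreover have "eventually (\<lambda>n. m n < m0 + h) sequentially"
      using order_tendstoD(2)[OF mconv, of "m0 + h"] h by simp
    ultimately show "eventually (\<lambda>n. a n < y) sequentially"
    proof eventually_elim
      case (elim n)
      have "a n = m n - b n" using abm[of n] by simp
      also have "\<dots> < (m0 + h) - (b0 - h)" using test[OF elim] .
      also have "\<dots> = y" by (rule hy)
      finally show ?case .
    qed
  qed
qed



theorem lemma4p8:
  fixes \<epsilon> p :: real
  assumes "0 < \<epsilon>" "\<epsilon> < 1/2" "1 \<le> p"
  shows
   "(\<forall>\<mu>s :: nat \<Rightarrow> real measure. tight \<mu>s \<and> (\<forall>n. atomless (\<mu>s n)) \<longrightarrow>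
        bdd_above (range (\<lambda>n. diameter (quantile_interval (\<mu>s n) \<epsilon>))) \<and>
        (\<forall>s\<in>{0<..<1}. bdd_above (range (\<lambda>n. \<bar>quantile (\<mu>s n) s\<bar>))))
    \<and> (\<forall>\<mu> \<nu>. Pp p \<mu> \<and> Pp p \<nu> \<and> atomless \<mu> \<and> atomless \<nu> \<longrightarrow>
        \<bar>tail_moment p \<epsilon> \<mu> powr (1/p) - tail_moment p \<epsilon> \<nu> powr (1/p)\<bar>
          \<le> (LINT z:({0<..<\<epsilon>} \<union> {1-\<epsilon><..<1})|lborel. \<bar>quantile \<mu> z - quantile \<nu> z\<bar> powr p) powr (1/p))
    \<and> (\<forall>(\<mu>s :: nat \<Rightarrow> real measure) \<mu>. (\<forall>n. Pp p (\<mu>s n) \<and> atomless (\<mu>s n)) \<and> Pp p \<mu> \<and> atomless \<mu> \<and>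
        (\<lambda>n. wasserstein p (\<mu>s n) \<mu>) \<longlonglongrightarrow> 0 \<longrightarrow>
        (\<lambda>n. tail_moment p \<epsilon> (\<mu>s n)) \<longlonglongrightarrow> tail_moment p \<epsilon> \<mu>)"
    using part1[OF assms(1,2)] part2[OF assms] part3[OF assms] by blast

end
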